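(* For all $X_n,Y_n\in\mathcal{T}^N$, $$D_{T,L^2}(\hat\mu_n(X_n),\hat\mu_n(Y_n))^2\le\frac{b^2}{N}\sum_{k\in I_n}\|X^k-Y^k\|_{L^2}^2,$$ where $\|x\|_{L^2}^2=\int_0^T x_t^2\,dt$.
   Context: $T>0$, $f:\mathbb{R}\to[0,1]$ Lipschitz with constant $1$, $\mathcal{T}=C([0,T],\mathbb{R})$. $(b_i)_{i\in\mathbb{Z}}$ is a positive summable sequence and $b=\sum_{i\in\mathbb{Z}}b_i$. For $n\ge0$, $I_n=\{-n,\dots,n\}$, $N=2n+1$. Shifts $(S^iu)^j=u^{i+j}$ on $\mathcal{T}^{\mathbb{Z}}$. For $u_n\in\mathcal{T}^N$, $u_{n,p}\in\mathcal{T}^{\mathbb{Z}}$ is the periodic extension, $u_{n,p}^j=u_n^{j\bmod I_n}$ (with $j\bmod I_n$ the element of $I_n$ congruent to $j$ mod $N$), and $\hat\mu_n(u_n)=\frac1N\sum_{i\in I_n}\delta_{S^iu_{n,p}}$. $d_{L^2}(u,v)=\sum_{i\in\mathbb{Z}}b_i\|f(u^i)-f(v^i)\|_{L^2}$ on $\mathcal{T}^{\mathbb{Z}}$ and $D_{T,L^2}(\mu,\nu)=\inf_\xi\int d_{L^2}(u,v)\,d\xi(u,v)$, infimum over couplings $\xi$ of $\mu$ and $\nu$. *)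

theory Defs
  imports "HOL-Probability.Probability"
begin

text \<open>The path space C([0,T],R), represented canonically by functions that are
  continuous on [0,T] and vanish outside [0,T].\<close>
definition CT :: "real \<Rightarrow> (real \<Rightarrow> real) set" where
  "CT T = {x. continuous_on {0..T} x \<and> (\<forall>t. t \<notin> {0..T} \<longrightarrow> x t = 0)}"

text \<open>Measurable structure on C([0,T]): sigma-algebra generated by the evaluations
  (which is the Borel sigma-algebra of the sup norm).\<close>
definition CTM :: "real \<Rightarrow> (real \<Rightarrow> real) measure" where
  "CTM T = restrict_space (PiM UNIV (\<lambda>_::real. (borel :: real measure))) (CT T)"

definition TZ :: "real \<Rightarrow> (int \<Rightarrow> real \<Rightarrow> real) measure" where
  "TZ T = PiM UNIV (\<lambda>_::int. CTM T)"

definition l2norm :: "real \<Rightarrow> (real \<Rightarrow> real) \<Rightarrow> real" where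
  "l2norm T x = sqrt (integral {0..T} (\<lambda>t. (x t)^2))"

definition dL2 :: "real \<Rightarrow> (real \<Rightarrow> real) \<Rightarrow> (int \<Rightarrow> real)
    \<Rightarrow> (int \<Rightarrow> real \<Rightarrow> real) \<Rightarrow> (int \<Rightarrow> real \<Rightarrow> real) \<Rightarrow> real" where
  "dL2 T f bs u v = (\<Sum>\<^sub>\<infinity>i\<in>UNIV. bs i * l2norm T (\<lambda>t. f (u i t) - f (v i t)))"

definition coupling :: "'a measure \<Rightarrow> 'a measure \<Rightarrow> 'a measure \<Rightarrow> ('a \<times> 'a) measure \<Rightarrow> bool" where
  "coupling M \<mu> \<nu> \<xi> \<longleftrightarrow> sets \<xi> = sets (M \<Otimes>\<^sub>M M) \<and> prob_space \<xi>
     \<and> distr \<xi> M fst = \<mu> \<and> distr \<xi> M snd = \<nu>"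

definition DTL2 :: "real \<Rightarrow> (real \<Rightarrow> real) \<Rightarrow> (int \<Rightarrow> real)
    \<Rightarrow> (int \<Rightarrow> real \<Rightarrow> real) measure \<Rightarrow> (int \<Rightarrow> real \<Rightarrow> real) measure \<Rightarrow> ennreal" where
  "DTL2 T f bs \<mu> \<nu> = Inf {(\<integral>\<^sup>+ p. ennreal (dL2 T f bs (fst p) (snd p)) \<partial>\<xi>) | \<xi>. coupling (TZ T) \<mu> \<nu> \<xi>}"

definition shift :: "int \<Rightarrow> (int \<Rightarrow> 'a) \<Rightarrow> (int \<Rightarrow> 'a)" where
  "shift i u = (\<lambda>j. u (i + j))"

definition modI :: "nat \<Rightarrow> int \<Rightarrow> int" where
  "modI n j = (j + int n) mod (2 * int n + 1) - int n"

definition perext :: "nat \<Rightarrow> (int \<Rightarrow> 'a) \<Rightarrow> (int \<Rightarrow> 'a)" where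
  "perext n u = (\<lambda>j. u (modI n j))"

definition empirical :: "real \<Rightarrow> nat \<Rightarrow> (int \<Rightarrow> real \<Rightarrow> real) \<Rightarrow> (int \<Rightarrow> real \<Rightarrow> real) measure" where
  "empirical T n u = measure_of (space (TZ T)) (sets (TZ T))
     (\<lambda>A. (\<Sum>i\<in>{- int n..int n}. indicator A (shift i (perext n u))) / ennreal (real (2 * n + 1)))"

end

theory Submission
  imports Defs
begin

lemma nn_integral_distr_point_le:
  assumes fin: "finite I" and p: "p \<in> I \<rightarrow> space M"
  shows "(\<integral>\<^sup>+x. g x \<partial>distr (point_measure I w) M p) \<le> (\<Sum>i\<in>I. w i * g (p i))"
proof -
  have pm: "p \<in> measurable (point_measure I w) M" using p by simp
  show ?thesis
    unfolding nn_integral_def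
  proof (rule SUP_least)
    fix s assume "s \<in> {s. simple_function (distr (point_measure I w) M p) s \<and> s \<le> g}"
    then have s: "simple_function (distr (point_measure I w) M p) s" and sg: "s \<le> g" by auto
    have "integral\<^sup>S (distr (point_measure I w) M p) s = integral\<^sup>N (distr (point_measure I w) M p) s"
      using nn_integral_eq_simple_integral[OF s] by simp
    also have "\<dots> = (\<integral>\<^sup>+x. s (p x) \<partial>point_measure I w)"
      by (rule nn_integral_distr[OF pm borel_measurable_simple_function[OF s]])
    also have "\<dots> = (\<Sum>i\<in>I. w i * s (p i))" using fin by (simp add: nn_integral_point_measure_finite)
    also have "\<dots> \<le> (\<Sum>i\<in>I. w i * g (p i))"
      using sg by (intro sum_mono mult_left_mono) (auto simp: le_fun_def)
    finally show "integral\<^sup>S (distr (point_measure I w) M p) s \<le> (\<Sum>i\<in>I. w i * g (p i))" .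
  qed
qed

lemma infsum_finite_sum:
  fixes g :: "'a \<Rightarrow> 'b \<Rightarrow> real"
  assumes "finite I" "\<And>i. i \<in> I \<Longrightarrow> (\<lambda>j. g j i) summable_on A"
  shows "(\<lambda>j. \<Sum>i\<in>I. g j i) summable_on A \<and> infsum (\<lambda>j. \<Sum>i\<in>I. g j i) A = (\<Sum>i\<in>I. infsum (\<lambda>j. g j i) A)"
  using assms
proof (induction I rule: finite_induct)
  case empty then show ?case by simp
next
  case (insert x F)
  then have h: "(\<lambda>j. \<Sum>i\<in>F. g j i) summable_on A" "infsum (\<lambda>j. \<Sum>i\<in>F. g j i) A = (\<Sum>i\<in>F. infsum (\<lambda>j. g j i) A)"
    and gx: "(\<lambda>j. g j x) summable_on A" by auto
  show ?case using insert(1,2) h gx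
    by (simp add: summable_on_add infsum_add)
qed


lemma modI_in: "modI n j \<in> {- int n..int n}"
  unfolding modI_def by (auto simp: pos_mod_bound[of "2 * int n + 1", simplified] )

lemma modI_id: "i \<in> {- int n..int n} \<Longrightarrow> modI n i = i"
  unfolding modI_def by (auto simp: mod_pos_pos_trivial)

lemma modI_add: "modI n (modI n x + c) = modI n (x + c)"
proof -
  have "(modI n x + c + int n) mod (2 * int n + 1) = ((x + int n) mod (2 * int n + 1) + c) mod (2 * int n + 1)"
    unfolding modI_def by (simp add: algebra_simps)
  also have "\<dots> = (x + c + int n) mod (2 * int n + 1)"
    by (metis mod_add_left_eq add.commute add.left_commute)
  finally show ?thesis unfolding modI_def by simp
qed

lemma sum_modI_shift:
  "(\<Sum>i\<in>{- int n..int n}. a (modI n (i + j))) = (\<Sum>k\<in>{- int n..int n}. (a k :: real))"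
proof (rule sum.reindex_bij_witness[where i="\<lambda>k. modI n (k - j)" and j="\<lambda>i. modI n (i + j)"])
  fix i assume "i \<in> {- int n..int n}"
  then show "modI n (modI n (i + j) - j) = i"
    using modI_add[of n "i+j" "-j"] modI_id[of i n] by simp
next
  fix k assume "k \<in> {- int n..int n}"
  then show "modI n (modI n (k - j) + j) = k"
    using modI_add[of n "k-j" "j"] modI_id[of k n] by simp
qed (rule modI_in | rule refl)+

lemma space_CTM: "space (CTM T) = CT T"
  unfolding CTM_def by (simp add: space_restrict_space space_PiM)

lemma space_TZ: "space (TZ T) = {u. \<forall>j. u j \<in> CT T}"
  unfolding TZ_def by (auto simp: space_PiM space_CTM PiE_def extensional_def)

lemma l2norm_nonneg: "0 \<le> l2norm T x"
  unfolding l2norm_def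
  by (cases "(\<lambda>t. (x t)^2) integrable_on {0..T}")
     (auto intro!: integral_nonneg simp: not_integrable_integral)

lemma l2norm_lip:
  fixes f :: "real \<Rightarrow> real"
  assumes lip: "\<forall>x y. \<bar>f x - f y\<bar> \<le> \<bar>x - y\<bar>" and x: "x \<in> CT T" and y: "y \<in> CT T"
  shows "l2norm T (\<lambda>t. f (x t) - f (y t)) \<le> l2norm T (\<lambda>t. x t - y t)"
proof -
  have "1-lipschitz_on UNIV f" using lip by (intro lipschitz_onI) (auto simp: dist_real_def)
  then have fc: "continuous_on UNIV f" by (rule lipschitz_on_continuous_on)
  have xc: "continuous_on {0..T} x" and yc: "continuous_on {0..T} y" using x y by (auto simp: CT_def)
  have c1: "continuous_on {0..T} (\<lambda>t. (f (x t) - f (y t))^2)"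
    by (intro continuous_intros continuous_on_compose2[OF fc] xc yc) auto
  have c2: "continuous_on {0..T} (\<lambda>t. (x t - y t)^2)"
    by (intro continuous_intros xc yc)
  have "integral {0..T} (\<lambda>t. (f (x t) - f (y t))^2) \<le> integral {0..T} (\<lambda>t. (x t - y t)^2)"
  proof (rule integral_le)
    show "(\<lambda>t. (f (x t) - f (y t))^2) integrable_on {0..T}" using c1 by (rule integrable_continuous_interval)
    show "(\<lambda>t. (x t - y t)^2) integrable_on {0..T}" using c2 by (rule integrable_continuous_interval)
    fix t
    have "\<bar>f (x t) - f (y t)\<bar> \<le> \<bar>x t - y t\<bar>" using lip by auto
    then show "(f (x t) - f (y t))^2 \<le> (x t - y t)^2" by (simp add: abs_le_square_iff)
  qed
  then show ?thesis unfolding l2norm_def by simp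
qed


lemma empirical_eq:
  assumes "\<And>i. i \<in> {- int n..int n} \<Longrightarrow> q i \<in> space (TZ T)"
    and "q = (\<lambda>i. shift i (perext n X))"
  shows "empirical T n X = distr (point_measure {- int n..int n} (\<lambda>_. ennreal (1 / real (2*n+1)))) (TZ T) q"
    (is "_ = ?D")
proof -
  let ?I = "{- int n..int n}"
  let ?N = "real (2*n+1)"
  have "?D = measure_of (space ?D) (sets ?D) (emeasure ?D)" by (rule measure_of_of_measure[symmetric])
  also have "\<dots> = measure_of (space (TZ T)) (sets (TZ T)) (emeasure ?D)" by simp
  also have "\<dots> = empirical T n X"
    unfolding empirical_def
  proof (rule measure_of_eq)
    show "sets (TZ T) \<subseteq> Pow (space (TZ T))" by (auto dest: sets.sets_into_space)
    fix a assume "a \<in> sigma_sets (space (TZ T)) (sets (TZ T))"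
    then have a: "a \<in> sets (TZ T)" by (simp add: sets.sigma_sets_eq)
    have qm: "q \<in> measurable (point_measure ?I (\<lambda>_. ennreal (1 / ?N))) (TZ T)" using assms(1) by auto
    have "emeasure ?D a = emeasure (point_measure ?I (\<lambda>_. ennreal (1 / ?N))) (q -` a \<inter> ?I)"
      using qm a by (simp add: emeasure_distr space_point_measure)
    also have "\<dots> = (\<Sum>i\<in>q -` a \<inter> ?I. ennreal (1 / ?N))"
      by (rule emeasure_point_measure_finite) auto
    also have "\<dots> = (\<Sum>i\<in>?I. indicator a (q i) * ennreal (1 / ?N))"
      by (simp add: sum.If_cases indicator_def Int_commute vimage_def)
    also have "\<dots> = (\<Sum>i\<in>?I. indicator a (q i)) / ennreal ?N"
      by (simp add: sum_distrib_right divide_ennreal_def ennreal_inverse_positive divide_ennreal[symmetric]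
            ennreal_divide_times)
    finally show "emeasure ?D a = (\<Sum>i\<in>?I. indicator a (shift i (perext n X))) / ennreal ?N"
      using assms(2) by simp
  qed
  finally show ?thesis by simp
qed


theorem lemma3p17:
  fixes T :: real and f :: "real \<Rightarrow> real" and bs :: "int \<Rightarrow> real" and n :: nat
    and X Y :: "int \<Rightarrow> real \<Rightarrow> real"
  assumes "T > 0"
    and "\<forall>x. f x \<in> {0..1}"
    and "\<forall>x y. \<bar>f x - f y\<bar> \<le> \<bar>x - y\<bar>"
    and "\<forall>i. bs i > 0"
    and "bs summable_on UNIV"
    and "\<forall>k\<in>{- int n..int n}. X k \<in> CT T"
    and "\<forall>k\<in>{- int n..int n}. Y k \<in> CT T"
  shows "(DTL2 T f bs (empirical T n X) (empirical T n Y))^2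
           \<le> ennreal ((\<Sum>\<^sub>\<infinity>i\<in>UNIV. bs i)^2 / real (2 * n + 1)
                * (\<Sum>k\<in>{- int n..int n}. (l2norm T (\<lambda>t. X k t - Y k t))^2))"
proof -
  define I where "I = {- int n..int n}"
  define N where "N = real (2 * n + 1)"
  define qX where "qX = (\<lambda>i. shift i (perext n X))"
  define qY where "qY = (\<lambda>i. shift i (perext n Y))"
  define P where "P = point_measure I (\<lambda>_. ennreal (1 / N))"
  define Pt where "Pt = (\<lambda>i. (qX i, qY i))"
  define \<xi> where "\<xi> = distr P (TZ T \<Otimes>\<^sub>M TZ T) Pt"
  define b where "b = (\<Sum>\<^sub>\<infinity>i\<in>UNIV. bs i)"
  define a where "a = (\<lambda>k. l2norm T (\<lambda>t. X k t - Y k t))"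
  define d where "d = (\<lambda>i. dL2 T f bs (qX i) (qY i))"
  have finI: "finite I" unfolding I_def by simp
  have cardI: "card I = 2 * n + 1" unfolding I_def by simp
  have Npos: "N > 0" unfolding N_def by simp
  have qXj: "qX i j = X (modI n (i + j))" for i j unfolding qX_def shift_def perext_def by simp
  have qYj: "qY i j = Y (modI n (i + j))" for i j unfolding qY_def shift_def perext_def by simp
  have qXs: "qX i \<in> space (TZ T)" for i using assms(6) modI_in by (auto simp: space_TZ qXj)
  have qYs: "qY i \<in> space (TZ T)" for i using assms(7) modI_in by (auto simp: space_TZ qYj)
  have eX: "empirical T n X = distr P (TZ T) qX"
    unfolding P_def I_def N_def by (rule empirical_eq[OF qXs qX_def])
  have eY: "empirical T n Y = distr P (TZ T) qY"
    unfolding P_def I_def N_def by (rule empirical_eq[OF qYs qY_def])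
  have Ptm: "Pt \<in> measurable P (TZ T \<Otimes>\<^sub>M TZ T)"
    unfolding P_def using qXs qYs by (auto simp: Pt_def space_pair_measure)
  have probP: "prob_space P"
  proof (rule prob_spaceI)
    have "emeasure P I = (\<Sum>i\<in>I. ennreal (1 / N))"
      unfolding P_def by (rule emeasure_point_measure_finite[OF finI]) simp
    also have "\<dots> = ennreal (real (card I)) * ennreal (1 / N)"
      by (simp add: ennreal_of_nat_eq_real_of_nat)
    also have "\<dots> = ennreal (real (card I) * (1 / N))"
      using Npos by (intro ennreal_mult[symmetric]) auto
    also have "\<dots> = 1" using cardI N_def by simp
    finally show "emeasure P (space P) = 1" by (simp add: P_def space_point_measure)
  qed
  have coup: "coupling (TZ T) (empirical T n X) (empirical T n Y) \<xi>"
    unfolding coupling_def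
  proof (intro conjI)
    show "sets \<xi> = sets (TZ T \<Otimes>\<^sub>M TZ T)" unfolding \<xi>_def by simp
    show "prob_space \<xi>" unfolding \<xi>_def by (rule prob_space.prob_space_distr[OF probP Ptm])
    show "distr \<xi> (TZ T) fst = empirical T n X"
      unfolding \<xi>_def eX by (subst distr_distr[OF measurable_fst Ptm]) (simp add: comp_def Pt_def)
    show "distr \<xi> (TZ T) snd = empirical T n Y"
      unfolding \<xi>_def eY by (subst distr_distr[OF measurable_snd Ptm]) (simp add: comp_def Pt_def)
  qed
  have dnn1: "0 \<le> d i" for i
    unfolding d_def dL2_def using assms(4)
    by (intro infsum_nonneg mult_nonneg_nonneg l2norm_nonneg) (auto intro: less_imp_le)
  have dnn: "0 \<le> (\<Sum>i\<in>I. d i)" using dnn1 by (simp add: sum_nonneg)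
  have "DTL2 T f bs (empirical T n X) (empirical T n Y) \<le> (\<integral>\<^sup>+ p. ennreal (dL2 T f bs (fst p) (snd p)) \<partial>\<xi>)"
    unfolding DTL2_def using coup by (intro Inf_lower) blast
  also have "\<dots> \<le> (\<Sum>i\<in>I. ennreal (1 / N) * ennreal (dL2 T f bs (fst (Pt i)) (snd (Pt i))))"
    unfolding \<xi>_def P_def
    by (rule nn_integral_distr_point_le[OF finI]) (use Ptm in \<open>auto simp: P_def\<close>)
  also have "\<dots> = (\<Sum>i\<in>I. ennreal (d i / N))"
    using Npos dnn1 by (intro sum.cong refl) (simp add: d_def Pt_def ennreal_mult[symmetric])
  also have "\<dots> = ennreal (\<Sum>i\<in>I. d i / N)"
    using Npos dnn1 by (intro sum_ennreal) auto
  also have "\<dots> = ennreal ((\<Sum>i\<in>I. d i) / N)" by (simp add: sum_divide_distrib)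
  finally have D1: "DTL2 T f bs (empirical T n X) (empirical T n Y) \<le> ennreal ((\<Sum>i\<in>I. d i) / N)" .
  have ann: "0 \<le> a k" for k unfolding a_def by (rule l2norm_nonneg)
  have bsnn: "0 \<le> bs j" for j using assms(4) by (auto intro: less_imp_le)
  define M where "M = (\<Sum>k\<in>I. a k)"
  have aM: "a (modI n m) \<le> M" for m
    unfolding M_def using modI_in[of n m] finI ann by (intro member_le_sum) (auto simp: I_def)
  have sumM: "(\<lambda>j. bs j * M) summable_on UNIV"
    using assms(5) by (rule summable_on_cmult_left)
  have suma: "(\<lambda>j. bs j * a (modI n (i + j))) summable_on UNIV" for i
    by (rule summable_on_comparison_test[OF sumM]) (use aM bsnn ann in \<open>auto intro: mult_left_mono\<close>)
  have cle: "l2norm T (\<lambda>t. f (qX i j t) - f (qY i j t)) \<le> a (modI n (i + j))" for i j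
    unfolding qXj qYj a_def
    using assms(6,7) modI_in[of n "i+j"] by (intro l2norm_lip[OF assms(3)]) auto
  have sumc: "(\<lambda>j. bs j * l2norm T (\<lambda>t. f (qX i j t) - f (qY i j t))) summable_on UNIV" for i
    by (rule summable_on_comparison_test[OF suma[of i]])
       (use cle bsnn l2norm_nonneg in \<open>auto intro: mult_left_mono\<close>)
  have dle: "d i \<le> (\<Sum>\<^sub>\<infinity>j. bs j * a (modI n (i + j)))" for i
    unfolding d_def dL2_def
    by (rule infsum_mono[OF sumc suma]) (use cle bsnn in \<open>auto intro: mult_left_mono\<close>)
  have main: "(\<Sum>i\<in>I. d i) \<le> b * (\<Sum>k\<in>I. a k)"
  proof -
    have "(\<Sum>i\<in>I. d i) \<le> (\<Sum>i\<in>I. (\<Sum>\<^sub>\<infinity>j. bs j * a (modI n (i + j))))"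
      by (intro sum_mono dle)
    also have "\<dots> = (\<Sum>\<^sub>\<infinity>j. (\<Sum>i\<in>I. bs j * a (modI n (i + j))))"
      using infsum_finite_sum[OF finI, of "\<lambda>j i. bs j * a (modI n (i + j))" UNIV] suma by simp
    also have "\<dots> = (\<Sum>\<^sub>\<infinity>j. bs j * M)"
      unfolding M_def I_def by (simp add: sum_distrib_left[symmetric] sum_modI_shift)
    also have "\<dots> = b * M" unfolding b_def by (rule infsum_cmult_left') 
    finally show ?thesis unfolding M_def .
  qed
  have bnn: "0 \<le> b" unfolding b_def using assms(4) by (intro infsum_nonneg) (auto intro: less_imp_le)
  have ann: "0 \<le> a k" for k unfolding a_def by (rule l2norm_nonneg)
  have real_ineq: "((\<Sum>i\<in>I. d i) / N)^2 \<le> b^2 / N * (\<Sum>k\<in>I. (a k)^2)"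
  proof -
    have "((\<Sum>i\<in>I. d i) / N)^2 \<le> (b * (\<Sum>k\<in>I. a k) / N)^2"
      using main dnn Npos by (intro power_mono divide_right_mono) auto
    also have "\<dots> = b^2 * (\<Sum>k\<in>I. a k)^2 / N^2" by (simp add: power_divide power_mult_distrib)
    also have "\<dots> \<le> b^2 * ((\<Sum>k\<in>I. (a k)^2) * N) / N^2"
      using sum_squared_le_sum_of_squares[of a I] cardI N_def Npos
      by (intro divide_right_mono mult_left_mono) auto
    also have "\<dots> = b^2 / N * (\<Sum>k\<in>I. (a k)^2)" using Npos by (simp add: power2_eq_square field_simps)
    finally show ?thesis .
  qed
  have "(DTL2 T f bs (empirical T n X) (empirical T n Y))^2 \<le> (ennreal ((\<Sum>i\<in>I. d i) / N))^2"
    using D1 by (rule power_mono) simp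
  also have "\<dots> = ennreal (((\<Sum>i\<in>I. d i) / N)^2)" using dnn Npos by (simp add: ennreal_power)
  also have "\<dots> \<le> ennreal (b^2 / N * (\<Sum>k\<in>I. (a k)^2))" using real_ineq by (rule ennreal_leI)
  finally show ?thesis unfolding b_def N_def I_def a_def .
qed

end
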